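(* Let $G$ be a totally disconnected locally compact group such that every proper commensurated open subgroup of $G$ is compact. Then every continuous homomorphism $\varphi:G\to H$, where $H$ is a totally disconnected locally compact group, has closed image.
   Context: A subgroup $U\leq G$ is commensurated if $gUg^{-1}\cap U$ has finite index in both $U$ and $gUg^{-1}$ for every $g\in G$. *)

theory Defs
  imports "HOL-Analysis.Analysis" "HOL-Algebra.Algebra"
begin

definition topological_group :: "('a, 'm) monoid_scheme \<Rightarrow> 'a topology \<Rightarrow> bool" where
  "topological_group G T \<longleftrightarrow> group G \<and> topspace T = carrier G
     \<and> continuous_map (prod_topology T T) T (\<lambda>(x, y). x \<otimes>\<^bsub>G\<^esub> y)
     \<and> continuous_map T T (\<lambda>x. inv\<^bsub>G\<^esub> x)"

definition totally_disconnected_space :: "'a topology \<Rightarrow> bool" where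
  "totally_disconnected_space T \<longleftrightarrow> (\<forall>S. connectedin T S \<longrightarrow> (\<exists>a. S \<subseteq> {a}))"

definition tdlc_group :: "('a, 'm) monoid_scheme \<Rightarrow> 'a topology \<Rightarrow> bool" where
  "tdlc_group G T \<longleftrightarrow> topological_group G T \<and> totally_disconnected_space T
     \<and> locally_compact_space T"

definition finite_index_in :: "('a, 'm) monoid_scheme \<Rightarrow> 'a set \<Rightarrow> 'a set \<Rightarrow> bool" where
  "finite_index_in G K U \<longleftrightarrow> finite ((\<lambda>x. x <#\<^bsub>G\<^esub> K) ` U)"

definition conj_set :: "('a, 'm) monoid_scheme \<Rightarrow> 'a \<Rightarrow> 'a set \<Rightarrow> 'a set" where
  "conj_set G g U = (\<lambda>u. g \<otimes>\<^bsub>G\<^esub> u \<otimes>\<^bsub>G\<^esub> inv\<^bsub>G\<^esub> g) ` U"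

definition commensurated :: "('a, 'm) monoid_scheme \<Rightarrow> 'a set \<Rightarrow> bool" where
  "commensurated G U \<longleftrightarrow> subgroup U G \<and>
     (\<forall>g \<in> carrier G. finite_index_in G (conj_set G g U \<inter> U) U
                    \<and> finite_index_in G (conj_set G g U \<inter> U) (conj_set G g U))"

end

theory Submission
  imports Defs
begin

lemma tg_group: "topological_group G T \<Longrightarrow> group G" by (simp add: topological_group_def)
lemma tg_top: "topological_group G T \<Longrightarrow> topspace T = carrier G" by (simp add: topological_group_def)

lemma (in group) tg_lmult_cont:
  assumes "topological_group G T" "a \<in> carrier G"
  shows "continuous_map T T (\<lambda>x. a \<otimes> x)"
proof -
  have m: "continuous_map (prod_topology T T) T (\<lambda>(x, y). x \<otimes> y)"
    using assms(1) by (simp add: topological_group_def)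
  have tp: "topspace T = carrier G" using assms(1) by (rule tg_top)
  have p: "continuous_map T (prod_topology T T) (\<lambda>x. (a, x))"
    unfolding continuous_map_pairwise o_def using assms(2) tp by (simp add: continuous_map_const)
  have e: "(\<lambda>(x, y). x \<otimes> y) \<circ> (\<lambda>x. (a, x)) = (\<lambda>x. a \<otimes> x)" by (rule ext) (simp only: comp_apply case_prod_conv)
  show ?thesis using continuous_map_compose[OF p m] unfolding e .
qed

lemma (in group) tg_rmult_cont:
  assumes "topological_group G T" "a \<in> carrier G"
  shows "continuous_map T T (\<lambda>x. x \<otimes> a)"
proof -
  have m: "continuous_map (prod_topology T T) T (\<lambda>(x, y). x \<otimes> y)"
    using assms(1) by (simp add: topological_group_def)
  have tp: "topspace T = carrier G" using assms(1) by (rule tg_top)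
  have p: "continuous_map T (prod_topology T T) (\<lambda>x. (x, a))"
    unfolding continuous_map_pairwise o_def using assms(2) tp by (simp add: continuous_map_const)
  have e: "(\<lambda>(x, y). x \<otimes> y) \<circ> (\<lambda>x. (x, a)) = (\<lambda>x. x \<otimes> a)" by (rule ext) (simp only: comp_apply case_prod_conv)
  show ?thesis using continuous_map_compose[OF p m] unfolding e .
qed

lemma (in group) tg_lcoset_open:
  assumes "topological_group G T" "a \<in> carrier G" "openin T S"
  shows "openin T (a <#\<^bsub>G\<^esub> S)"
proof -
  have Sc: "S \<subseteq> carrier G" using openin_subset assms tg_top by metis
  have tp: "topspace T = carrier G" using assms tg_top by metis
  have "a <#\<^bsub>G\<^esub> S = {x \<in> topspace T. inv a \<otimes> x \<in> S}"
  proof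
    show "a <#\<^bsub>G\<^esub> S \<subseteq> {x \<in> topspace T. inv a \<otimes> x \<in> S}"
    proof
      fix x assume "x \<in> a <#\<^bsub>G\<^esub> S"
      then obtain s where s: "s \<in> S" "x = a \<otimes> s" unfolding l_coset_def by blast
      have sc: "s \<in> carrier G" using s(1) Sc by blast
      have "inv a \<otimes> x = s" using s(2) sc assms(2) by (simp add: m_assoc[symmetric])
      moreover have "x \<in> topspace T" using s(2) sc assms(2) tp by simp
      ultimately show "x \<in> {x \<in> topspace T. inv a \<otimes> x \<in> S}" using s(1) by simp
    qed
    show "{x \<in> topspace T. inv a \<otimes> x \<in> S} \<subseteq> a <#\<^bsub>G\<^esub> S"
    proof
      fix x assume x: "x \<in> {x \<in> topspace T. inv a \<otimes> x \<in> S}"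
      then have xc: "x \<in> carrier G" using assms tg_top by auto
      have "x = a \<otimes> (inv a \<otimes> x)" using xc assms by (simp add: m_assoc[symmetric])
      then show "x \<in> a <#\<^bsub>G\<^esub> S" using x unfolding l_coset_def by blast
    qed
  qed
  moreover have "openin T {x \<in> topspace T. inv a \<otimes> x \<in> S}"
    using openin_continuous_map_preimage[OF tg_lmult_cont[OF assms(1) inv_closed[OF assms(2)]] assms(3)] .
  ultimately show ?thesis by simp
qed

lemma (in group) tdlc_hausdorff:
  assumes "tdlc_group G T"
  shows "Hausdorff_space T"
proof -
  have tg: "topological_group G T" and td: "totally_disconnected_space T"
    using assms by (auto simp: tdlc_group_def)
  have t1: "t1_space T"
    unfolding t1_space_closedin_singleton
  proof
    fix x assume x: "x \<in> topspace T"
    have "connectedin T (T closure_of {x})"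
      using x by (simp add: connectedin_closure_of)
    then obtain a where "T closure_of {x} \<subseteq> {a}" using td totally_disconnected_space_def by blast
    moreover have "x \<in> T closure_of {x}" using x closure_of_subset[of "{x}" T] by simp
    ultimately have "T closure_of {x} = {x}" by auto
    then show "closedin T {x}" by (metis closure_of_eq)
  qed
  have cd: "continuous_map (prod_topology T T) T (\<lambda>p. fst p \<otimes> inv (snd p))"
  proof -
    have m: "continuous_map (prod_topology T T) T (\<lambda>(x, y). x \<otimes> y)"
      using tg by (simp add: topological_group_def)
    have i: "continuous_map T T (\<lambda>x. inv x)" using tg by (simp add: topological_group_def)
    have p: "continuous_map (prod_topology T T) (prod_topology T T) (\<lambda>p. (fst p, inv (snd p)))"
      unfolding continuous_map_pairwise o_def using continuous_map_fst continuous_map_compose[OF continuous_map_snd[of T T] i]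
      by (simp add: o_def)
    have e: "(\<lambda>(x, y). x \<otimes> y) \<circ> (\<lambda>p. (fst p, inv (snd p))) = (\<lambda>p. fst p \<otimes> inv (snd p))" by (rule ext) (simp only: comp_apply case_prod_conv)
    show ?thesis using continuous_map_compose[OF p m] unfolding e .
  qed
  have "closedin T {\<one>}" using t1 tg_top[OF tg] by (simp add: t1_space_closedin_singleton)
  then have c: "closedin (prod_topology T T) {p \<in> topspace (prod_topology T T). fst p \<otimes> inv (snd p) \<in> {\<one>}}"
    by (rule closedin_continuous_map_preimage[OF cd])
  have "{p \<in> topspace (prod_topology T T). fst p \<otimes> inv (snd p) \<in> {\<one>}} = (\<lambda>x. (x,x)) ` topspace T"
  proof (rule subset_antisym)
    show "{p \<in> topspace (prod_topology T T). fst p \<otimes> inv (snd p) \<in> {\<one>}} \<subseteq> (\<lambda>x. (x,x)) ` topspace T"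
    proof
      fix p assume P: "p \<in> {p \<in> topspace (prod_topology T T). fst p \<otimes> inv (snd p) \<in> {\<one>}}"
      obtain x y where pxy: "p = (x, y)" by (cases p)
      have xy: "x \<in> topspace T" "y \<in> topspace T" "x \<otimes> inv y = \<one>" using P unfolding pxy by simp_all
      have xc: "x \<in> carrier G" and yc: "y \<in> carrier G" using xy(1,2) tg_top[OF tg] by simp_all
      have "x = x \<otimes> (inv y \<otimes> y)" using xc yc by simp
      also have "\<dots> = (x \<otimes> inv y) \<otimes> y" using xc yc by (simp only: m_assoc inv_closed)
      also have "\<dots> = y" using xy(3) yc by simp
      finally have "x = y" .
      then have "p = (\<lambda>x. (x,x)) x" unfolding pxy by simp
      then show "p \<in> (\<lambda>x. (x,x)) ` topspace T" using xy(1) by (rule image_eqI)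
    qed
    show "(\<lambda>x. (x,x)) ` topspace T \<subseteq> {p \<in> topspace (prod_topology T T). fst p \<otimes> inv (snd p) \<in> {\<one>}}"
    proof
      fix p assume "p \<in> (\<lambda>x. (x,x)) ` topspace T"
      then obtain x where x: "x \<in> topspace T" "p = (x, x)" by blast
      have xc: "x \<in> carrier G" using x(1) tg_top[OF tg] by simp
      show "p \<in> {p \<in> topspace (prod_topology T T). fst p \<otimes> inv (snd p) \<in> {\<one>}}"
        unfolding x(2) using x(1) xc by simp
    qed
  qed
  with c show ?thesis by (simp add: Hausdorff_space_closedin_diagonal)
qed


lemma (in group) coset_eq_of_mem:
  assumes "subgroup K G" "z \<in> carrier G" "y \<in> z <#\<^bsub>G\<^esub> K"
  shows "y <#\<^bsub>G\<^esub> K = z <#\<^bsub>G\<^esub> K"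
proof -
  obtain k where k: "k \<in> K" "y = z \<otimes> k" using assms(3) unfolding l_coset_def by blast
  have kc: "k \<in> carrier G" using k(1) subgroup.mem_carrier[OF assms(1)] by blast
  show ?thesis
  proof
    show "y <#\<^bsub>G\<^esub> K \<subseteq> z <#\<^bsub>G\<^esub> K"
    proof
      fix w assume "w \<in> y <#\<^bsub>G\<^esub> K"
      then obtain k' where k': "k' \<in> K" "w = y \<otimes> k'" unfolding l_coset_def by blast
      have k'c: "k' \<in> carrier G" using k'(1) subgroup.mem_carrier[OF assms(1)] by blast
      have "w = z \<otimes> (k \<otimes> k')" using k(2) k'(2) kc k'c assms(2) by (simp add: m_assoc)
      moreover have "k \<otimes> k' \<in> K" using subgroup.m_closed[OF assms(1) k(1) k'(1)] .
      ultimately show "w \<in> z <#\<^bsub>G\<^esub> K" unfolding l_coset_def by blast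
    qed
    show "z <#\<^bsub>G\<^esub> K \<subseteq> y <#\<^bsub>G\<^esub> K"
    proof
      fix w assume "w \<in> z <#\<^bsub>G\<^esub> K"
      then obtain k' where k': "k' \<in> K" "w = z \<otimes> k'" unfolding l_coset_def by blast
      have k'c: "k' \<in> carrier G" using k'(1) subgroup.mem_carrier[OF assms(1)] by blast
      have "y \<otimes> (inv k \<otimes> k') = z \<otimes> (k \<otimes> (inv k \<otimes> k'))" using k kc k'c assms m_assoc by simp
      also have "\<dots> = w" using kc k'c k' by (simp add: m_assoc[symmetric])
      finally have "w = y \<otimes> (inv k \<otimes> k')" by simp
      moreover have "inv k \<otimes> k' \<in> K" using subgroup.m_closed[OF assms(1) subgroup.m_inv_closed[OF assms(1) k(1)] k'(1)] .
      ultimately show "w \<in> y <#\<^bsub>G\<^esub> K" unfolding l_coset_def by blast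
    qed
  qed
qed

lemma (in group) coset_eq_iff:
  assumes "subgroup K G" "a \<in> carrier G" "b \<in> carrier G"
  shows "a <#\<^bsub>G\<^esub> K = b <#\<^bsub>G\<^esub> K \<longleftrightarrow> inv a \<otimes> b \<in> K"
proof
  assume e: "a <#\<^bsub>G\<^esub> K = b <#\<^bsub>G\<^esub> K"
  have "b \<in> b <#\<^bsub>G\<^esub> K" using lcos_self assms by blast
  then obtain k where "k \<in> K" "b = a \<otimes> k" using e unfolding l_coset_def by blast
  moreover have "k \<in> carrier G" using \<open>k \<in> K\<close> subgroup.mem_carrier[OF assms(1)] by blast
  ultimately have "inv a \<otimes> b = k" using assms(2) by (metis inv_closed l_inv l_one m_assoc)
  then show "inv a \<otimes> b \<in> K" using \<open>k \<in> K\<close> by simp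
next
  assume "inv a \<otimes> b \<in> K"
  then have "b \<in> a <#\<^bsub>G\<^esub> K" using subgroup.lcos_module_rev[OF assms(1) is_group assms(2,3)] by blast
  then have "b <#\<^bsub>G\<^esub> K = a <#\<^bsub>G\<^esub> K" by (rule coset_eq_of_mem[OF assms(1) assms(2)])
  then show "a <#\<^bsub>G\<^esub> K = b <#\<^bsub>G\<^esub> K" by (rule sym)
qed

lemma finite_image_transfer:
  assumes "\<And>x y. x \<in> U \<Longrightarrow> y \<in> U \<Longrightarrow> f x = f y \<longleftrightarrow> g x = g y"
    and "finite (g ` U)"
  shows "finite (f ` U)"
proof -
  define r where "r b = f (SOME x. x \<in> U \<and> g x = b)" for b
  have "f ` U \<subseteq> r ` (g ` U)"
  proof
    fix z assume "z \<in> f ` U"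
    then obtain x where x: "x \<in> U" "z = f x" by blast
    have ex: "\<exists>x'. x' \<in> U \<and> g x' = g x" using x by blast
    have "(SOME x'. x' \<in> U \<and> g x' = g x) \<in> U \<and> g (SOME x'. x' \<in> U \<and> g x' = g x) = g x"
      using someI_ex[OF ex] .
    then have "r (g x) = z" using assms(1) x unfolding r_def by metis
    then show "z \<in> r ` (g ` U)" using x by blast
  qed
  then show ?thesis using assms(2) finite_subset by blast
qed

lemma (in group) tg_finite_cosets:
  assumes "topological_group G T" "compactin T A" "subgroup K G" "openin T K"
  shows "finite ((\<lambda>y. y <#\<^bsub>G\<^esub> K) ` A)"
proof -
  have tp: "topspace T = carrier G" using assms tg_top by metis
  have Ac: "A \<subseteq> carrier G" using assms(2) compactin_subset_topspace tp by metis
  have cov: "A \<subseteq> \<Union>((\<lambda>y. y <#\<^bsub>G\<^esub> K) ` A)" using Ac lcos_self assms(3) by blast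
  have op: "\<forall>B\<in>(\<lambda>y. y <#\<^bsub>G\<^esub> K) ` A. openin T B" using tg_lcoset_open assms Ac by blast
  obtain F where F: "finite F" "F \<subseteq> (\<lambda>y. y <#\<^bsub>G\<^esub> K) ` A" "A \<subseteq> \<Union>F"
    using assms(2) cov op unfolding compactin_def by metis
  have "(\<lambda>y. y <#\<^bsub>G\<^esub> K) ` A \<subseteq> F"
  proof
    fix B assume "B \<in> (\<lambda>y. y <#\<^bsub>G\<^esub> K) ` A"
    then obtain y where y: "y \<in> A" "B = y <#\<^bsub>G\<^esub> K" by blast
    then obtain B' where "B' \<in> F" "y \<in> B'" using F by blast
    then obtain z where z: "z \<in> A" "B' = z <#\<^bsub>G\<^esub> K" using F by blast
    have zc: "z \<in> carrier G" using z(1) Ac by blast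
    have "y \<in> z <#\<^bsub>G\<^esub> K" using \<open>y \<in> B'\<close> z(2) by simp
    then have "y <#\<^bsub>G\<^esub> K = z <#\<^bsub>G\<^esub> K" by (rule coset_eq_of_mem[OF assms(3) zc])
    then have "B = B'" using y(2) z(2) by (simp only:)
    then show "B \<in> F" using \<open>B' \<in> F\<close> by (simp only:)
  qed
  then show ?thesis by (rule finite_subset[OF _ F(1)])
qed

lemma (in group) tdlc_compact_open_nbhd:
  assumes "tdlc_group G T" "openin T W" "\<one> \<in> W"
  obtains U where "openin T U" "compactin T U" "\<one> \<in> U" "U \<subseteq> W"
proof -
  have tg: "topological_group G T" and td: "totally_disconnected_space T" and lc: "locally_compact_space T"
    using assms by (auto simp: tdlc_group_def)
  have tp: "topspace T = carrier G" using tg tg_top by metis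
  have hs: "Hausdorff_space T" using tdlc_hausdorff assms by blast
  obtain U0 K0 where U0: "openin T U0" "compactin T K0" "\<one> \<in> U0" "U0 \<subseteq> K0"
    using lc tp unfolding locally_compact_space_def by (metis one_closed)
  have cc: "connected_component_of_set T \<one> = {\<one>}"
  proof -
    have "connectedin T (connected_component_of_set T \<one>)" by (simp add: connectedin_connected_component_of)
    then obtain a where "connected_component_of_set T \<one> \<subseteq> {a}" using td totally_disconnected_space_def by blast
    moreover have "\<one> \<in> connected_component_of_set T \<one>" using connected_component_of_refl tp by fastforce
    ultimately show ?thesis by auto
  qed
  have C: "{\<one>} \<in> connected_components_of T"
    unfolding connected_components_of_def using cc tp by (metis image_eqI one_closed)
  have Cc: "compactin T {\<one>}" using tp by simp
  obtain U V where UV: "openin T U" "openin T V" "disjnt U V" "U \<union> V = topspace T" "{\<one>} \<subseteq> U" "U \<subseteq> W \<inter> U0"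
    using wilder_locally_compact_component_thm[OF lc hs C Cc, of "W \<inter> U0"] assms(2,3) U0(1,3) by blast
  have "U = topspace T - V" using UV(3,4) by (auto simp: disjnt_def)
  then have "closedin T U" using UV(2) by auto
  then have "compactin T U" using closed_compactin[OF U0(2)] UV(6) U0(4) by blast
  then show ?thesis using UV(5,6) by (intro that[OF UV(1)]) auto
qed

lemma (in group) tg_open_subgroup_in:
  assumes "topological_group G T" "openin T K" "compactin T K" "\<one> \<in> K"
  obtains V where "subgroup V G" "openin T V" "V \<subseteq> K"
proof -
  have tp: "topspace T = carrier G" using assms tg_top by metis
  have Kc: "K \<subseteq> carrier G" using assms(2) openin_subset tp by metis
  have m: "continuous_map (prod_topology T T) T (\<lambda>(x, y). x \<otimes> y)"
    using assms(1) by (simp add: topological_group_def)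
  have i: "continuous_map T T (\<lambda>x. inv x)" using assms by (simp add: topological_group_def)
  define W where "W = {p \<in> topspace (prod_topology T T). (\<lambda>(x, y). x \<otimes> y) p \<in> K}"
  have Wo: "openin (prod_topology T T) W" unfolding W_def
    using openin_continuous_map_preimage[OF m assms(2)] .
  have "K \<times> {\<one>} \<subseteq> W"
  proof
    fix p assume "p \<in> K \<times> {\<one>}"
    then obtain k where k: "k \<in> K" "p = (k, \<one>)" by blast
    have kc: "k \<in> carrier G" using k(1) Kc by blast
    show "p \<in> W" unfolding W_def using k kc tp by simp
  qed
  then obtain U0 Vn where UV: "openin T U0" "openin T Vn" "K \<subseteq> U0" "\<one> \<in> Vn" "U0 \<times> Vn \<subseteq> W"
    using tube_lemma_left[OF Wo assms(3), of "\<one>"] tp by auto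
  have KV: "k \<otimes> v \<in> K" if "k \<in> K" "v \<in> Vn" for k v
  proof -
    have "(k, v) \<in> W" using UV(3,5) that by blast
    then show ?thesis unfolding W_def by simp
  qed
  have Vnc: "Vn \<subseteq> carrier G" using UV(2) openin_subset tp by metis
  define S where "S = Vn \<inter> {x \<in> topspace T. inv x \<in> Vn}"
  have So: "openin T S" unfolding S_def using openin_continuous_map_preimage[OF i UV(2)] UV(2) by (intro openin_Int)
  have S1: "\<one> \<in> S" unfolding S_def using UV(4) tp by simp
  have Sc: "S \<subseteq> carrier G" using Vnc S_def by blast
  define St where "St = {h \<in> carrier G. \<forall>k\<in>K. k \<otimes> h \<in> K \<and> k \<otimes> inv h \<in> K}"
  have StD: "k \<otimes> h \<in> K \<and> k \<otimes> inv h \<in> K" if "h \<in> St" "k \<in> K" for h k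
    using that unfolding St_def by blast
  have StC: "h \<in> carrier G" if "h \<in> St" for h
    using that unfolding St_def by blast
  have StI: "h \<in> St" if "h \<in> carrier G" "\<And>k. k \<in> K \<Longrightarrow> k \<otimes> h \<in> K \<and> k \<otimes> inv h \<in> K" for h
    using that unfolding St_def by blast
  have sub: "subgroup St G"
  proof (rule subgroupI)
    show "St \<subseteq> carrier G" using StC by blast
    have "\<one> \<in> St"
    proof (rule StI)
      fix k assume "k \<in> K"
      moreover have "k \<in> carrier G" using \<open>k \<in> K\<close> Kc by blast
      ultimately show "k \<otimes> \<one> \<in> K \<and> k \<otimes> inv \<one> \<in> K" by simp
    qed simp
    then show "St \<noteq> {}" by blast
    show "inv a \<in> St" if "a \<in> St" for a
    proof (rule StI)
      show "inv a \<in> carrier G" using StC[OF that] by simp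
      fix k assume "k \<in> K"
      then show "k \<otimes> inv a \<in> K \<and> k \<otimes> inv (inv a) \<in> K" using StD[OF that] StC[OF that] by simp
    qed
    show "a \<otimes> b \<in> St" if "a \<in> St" "b \<in> St" for a b
    proof -
      have ac: "a \<in> carrier G" and bc: "b \<in> carrier G" using that StC by auto
      have "k \<otimes> (a \<otimes> b) \<in> K \<and> k \<otimes> inv (a \<otimes> b) \<in> K" if k: "k \<in> K" for k
      proof -
        have kc: "k \<in> carrier G" using k Kc by blast
        have "k \<otimes> (a \<otimes> b) = (k \<otimes> a) \<otimes> b" using kc ac bc by (simp add: m_assoc)
        moreover have "k \<otimes> a \<in> K" using StD[OF \<open>a \<in> St\<close> k] by blast
        ultimately have 1: "k \<otimes> (a \<otimes> b) \<in> K" using StD[OF \<open>b \<in> St\<close>] by simp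
        have "k \<otimes> inv (a \<otimes> b) = (k \<otimes> inv b) \<otimes> inv a" using kc ac bc by (simp add: m_assoc inv_mult_group)
        moreover have "k \<otimes> inv b \<in> K" using StD[OF \<open>b \<in> St\<close> k] by blast
        ultimately have 2: "k \<otimes> inv (a \<otimes> b) \<in> K" using StD[OF \<open>a \<in> St\<close>] by simp
        show ?thesis using 1 2 by blast
      qed
      then show ?thesis using ac bc by (intro StI) auto
    qed
  qed
  have StK: "St \<subseteq> K"
  proof
    fix h assume h: "h \<in> St"
    have "\<one> \<otimes> h \<in> K" using StD[OF h assms(4)] by blast
    then show "h \<in> K" using StC[OF h] by simp
  qed
  have "openin T St"
    unfolding openin_subopen[of T St]
  proof
    fix h assume h: "h \<in> St"
    have hc: "h \<in> carrier G" using StC[OF h] .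
    have "h <#\<^bsub>G\<^esub> S \<subseteq> St"
    proof
      fix x assume "x \<in> h <#\<^bsub>G\<^esub> S"
      then obtain s where s: "s \<in> S" "x = h \<otimes> s" unfolding l_coset_def by blast
      have sc: "s \<in> carrier G" using s Sc by blast
      have sV: "s \<in> Vn" "inv s \<in> Vn" using s S_def by auto
      have xK: "k \<otimes> x \<in> K \<and> k \<otimes> inv x \<in> K" if k: "k \<in> K" for k
      proof -
        have kc: "k \<in> carrier G" using k Kc by blast
        have e1: "k \<otimes> x = (k \<otimes> h) \<otimes> s" unfolding s(2) using kc hc sc by (rule m_assoc[symmetric])
        have "k \<otimes> h \<in> K" using StD[OF h k] by blast
        then have "(k \<otimes> h) \<otimes> s \<in> K" using sV(1) by (rule KV)
        then have 1: "k \<otimes> x \<in> K" unfolding e1 .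
        have e2: "k \<otimes> inv x = (k \<otimes> inv s) \<otimes> inv h"
        proof -
          have "inv x = inv s \<otimes> inv h" unfolding s(2) using hc sc by (rule inv_mult_group)
          then show ?thesis using kc hc sc by (simp add: m_assoc)
        qed
        have "k \<otimes> inv s \<in> K" using k sV(2) by (rule KV)
        then have "(k \<otimes> inv s) \<otimes> inv h \<in> K" using StD[OF h] by blast
        then have 2: "k \<otimes> inv x \<in> K" unfolding e2 .
        show ?thesis using 1 2 by blast
      qed
      have "x \<in> carrier G" using hc sc s by simp
      then show "x \<in> St" using xK by (rule StI)
    qed
    moreover have "h \<in> h <#\<^bsub>G\<^esub> S"
    proof -
      have "h \<otimes> \<one> \<in> h <#\<^bsub>G\<^esub> S" using S1 unfolding l_coset_def by blast
      then show ?thesis using hc by simp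
    qed
    moreover have "openin T (h <#\<^bsub>G\<^esub> S)" using tg_lcoset_open[OF assms(1) hc So] .
    ultimately show "\<exists>T'. openin T T' \<and> h \<in> T' \<and> T' \<subseteq> St" by blast
  qed
  then show ?thesis by (rule that[OF sub _ StK])
qed

lemma (in group) tg_open_subgroup_closed:
  assumes "topological_group G T" "subgroup V G" "openin T V"
  shows "closedin T V"
proof -
  have tp: "topspace T = carrier G" using assms tg_top by metis
  have "topspace T - V = \<Union>((\<lambda>a. a <#\<^bsub>G\<^esub> V) ` (carrier G - V))"
  proof
    show "topspace T - V \<subseteq> \<Union>((\<lambda>a. a <#\<^bsub>G\<^esub> V) ` (carrier G - V))"
    proof
      fix x assume x: "x \<in> topspace T - V"
      then have "x \<in> x <#\<^bsub>G\<^esub> V" using lcos_self[OF _ assms(2)] tp by blast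
      then show "x \<in> \<Union>((\<lambda>a. a <#\<^bsub>G\<^esub> V) ` (carrier G - V))" using x tp by blast
    qed
    show "\<Union>((\<lambda>a. a <#\<^bsub>G\<^esub> V) ` (carrier G - V)) \<subseteq> topspace T - V"
    proof
      fix x assume "x \<in> \<Union>((\<lambda>a. a <#\<^bsub>G\<^esub> V) ` (carrier G - V))"
      then obtain a v where av: "a \<in> carrier G" "a \<notin> V" "v \<in> V" "x = a \<otimes> v" unfolding l_coset_def by blast
      have vc: "v \<in> carrier G" using av(3) subgroup.mem_carrier[OF assms(2)] by blast
      have "x \<notin> V"
      proof
        assume "x \<in> V"
        then have "x \<otimes> inv v \<in> V" using subgroup.m_closed[OF assms(2) _ subgroup.m_inv_closed[OF assms(2) av(3)]] by blast
        moreover have "x \<otimes> inv v = a" using av vc by (simp add: m_assoc)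
        ultimately show False using av by simp
      qed
      moreover have "x \<in> carrier G" using av vc by simp
      ultimately show "x \<in> topspace T - V" using tp by simp
    qed
  qed
  moreover have "openin T (\<Union>((\<lambda>a. a <#\<^bsub>G\<^esub> V) ` (carrier G - V)))"
    by (intro openin_Union) (auto intro: tg_lcoset_open[OF assms(1) _ assms(3)])
  ultimately have "openin T (topspace T - V)" by simp
  then show ?thesis unfolding closedin_def using openin_subset[OF assms(3)] by simp
qed

lemma (in group) tdlc_small_compact_open_subgroup:
  assumes "tdlc_group G T" "openin T W" "\<one> \<in> W"
  obtains V where "subgroup V G" "openin T V" "compactin T V" "V \<subseteq> W"
proof -
  have tg: "topological_group G T" using assms by (simp add: tdlc_group_def)
  obtain U where U: "openin T U" "compactin T U" "\<one> \<in> U" "U \<subseteq> W"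
    using tdlc_compact_open_nbhd[OF assms] by blast
  obtain V where V: "subgroup V G" "openin T V" "V \<subseteq> U"
    using tg_open_subgroup_in[OF tg U(1,2,3)] by blast
  have "compactin T V" using closed_compactin[OF U(2) V(3) tg_open_subgroup_closed[OF tg V(1,2)]] .
  then show ?thesis using V(3) U(4) by (intro that[OF V(1,2)]) auto
qed


lemma (in group) inv_cancel_l: "x \<in> carrier G \<Longrightarrow> y \<in> carrier G \<Longrightarrow> inv x \<otimes> (x \<otimes> y) = y"
  by (simp add: m_assoc[symmetric])
lemma (in group) inv_cancel_l2: "x \<in> carrier G \<Longrightarrow> y \<in> carrier G \<Longrightarrow> x \<otimes> (inv x \<otimes> y) = y"
  by (simp add: m_assoc[symmetric])

lemma (in group) conj_set_eq:
  assumes "V \<subseteq> carrier G" "c \<in> carrier G"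
  shows "conj_set G c V = {y \<in> carrier G. inv c \<otimes> y \<otimes> c \<in> V}"
proof
  show "conj_set G c V \<subseteq> {y \<in> carrier G. inv c \<otimes> y \<otimes> c \<in> V}"
  proof
    fix y assume "y \<in> conj_set G c V"
    then obtain u where u: "u \<in> V" "y = c \<otimes> u \<otimes> inv c" unfolding conj_set_def by blast
    have uc: "u \<in> carrier G" using u(1) assms(1) by blast
    have "y \<in> carrier G" using u(2) uc assms(2) by simp
    moreover have "inv c \<otimes> y \<otimes> c = u" unfolding u(2) using uc assms(2) by (simp add: m_assoc inv_cancel_l)
    ultimately show "y \<in> {y \<in> carrier G. inv c \<otimes> y \<otimes> c \<in> V}" using u(1) by simp
  qed
  show "{y \<in> carrier G. inv c \<otimes> y \<otimes> c \<in> V} \<subseteq> conj_set G c V"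
  proof
    fix y assume y: "y \<in> {y \<in> carrier G. inv c \<otimes> y \<otimes> c \<in> V}"
    have yc: "y \<in> carrier G" using y by simp
    have "y = c \<otimes> (inv c \<otimes> y \<otimes> c) \<otimes> inv c" using yc assms(2) by (simp add: m_assoc inv_cancel_l2)
    moreover have "inv c \<otimes> y \<otimes> c \<in> V" using y by simp
    ultimately show "y \<in> conj_set G c V" unfolding conj_set_def by (rule image_eqI)
  qed
qed

lemma (in group) conj_set_subgroup:
  assumes "subgroup V G" "c \<in> carrier G"
  shows "subgroup (conj_set G c V) G"
proof -
  have Vc: "V \<subseteq> carrier G" using assms(1) subgroup.subset by blast
  have "subgroup {y \<in> carrier G. inv c \<otimes> y \<otimes> c \<in> V} G"
  proof (rule subgroupI)
    show "{y \<in> carrier G. inv c \<otimes> y \<otimes> c \<in> V} \<subseteq> carrier G" by blast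
    have "inv c \<otimes> \<one> \<otimes> c = \<one>" using assms(2) by simp
    then have "\<one> \<in> {y \<in> carrier G. inv c \<otimes> y \<otimes> c \<in> V}" using subgroup.one_closed[OF assms(1)] by simp
    then show "{y \<in> carrier G. inv c \<otimes> y \<otimes> c \<in> V} \<noteq> {}" by blast
    show "inv a \<in> {y \<in> carrier G. inv c \<otimes> y \<otimes> c \<in> V}" if a: "a \<in> {y \<in> carrier G. inv c \<otimes> y \<otimes> c \<in> V}" for a
    proof -
      have ac: "a \<in> carrier G" and av: "inv c \<otimes> a \<otimes> c \<in> V" using a by simp_all
      have "inv c \<otimes> inv a \<otimes> c = inv (inv c \<otimes> a \<otimes> c)" using ac assms(2) by (simp add: inv_mult_group m_assoc)
      then have "inv c \<otimes> inv a \<otimes> c \<in> V" using subgroup.m_inv_closed[OF assms(1) av] by simp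
      then show ?thesis using ac by simp
    qed
    show "a \<otimes> b \<in> {y \<in> carrier G. inv c \<otimes> y \<otimes> c \<in> V}"
      if a: "a \<in> {y \<in> carrier G. inv c \<otimes> y \<otimes> c \<in> V}" and b: "b \<in> {y \<in> carrier G. inv c \<otimes> y \<otimes> c \<in> V}" for a b
    proof -
      have ac: "a \<in> carrier G" and av: "inv c \<otimes> a \<otimes> c \<in> V" using a by simp_all
      have bc: "b \<in> carrier G" and bv: "inv c \<otimes> b \<otimes> c \<in> V" using b by simp_all
      have "inv c \<otimes> (a \<otimes> b) \<otimes> c = (inv c \<otimes> a \<otimes> c) \<otimes> (inv c \<otimes> b \<otimes> c)"
        using ac bc assms(2) by (simp add: m_assoc inv_cancel_l2)
      then have "inv c \<otimes> (a \<otimes> b) \<otimes> c \<in> V" using subgroup.m_closed[OF assms(1) av bv] by simp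
      then show ?thesis using ac bc by simp
    qed
  qed
  then show ?thesis using conj_set_eq[OF Vc assms(2)] by simp
qed

lemma (in group) conj_set_open:
  assumes "topological_group G T" "openin T V" "c \<in> carrier G"
  shows "openin T (conj_set G c V)"
proof -
  have tp: "topspace T = carrier G" using assms(1) by (rule tg_top)
  have Vc: "V \<subseteq> carrier G" using openin_subset[OF assms(2)] tp by simp
  have c1: "continuous_map T T (\<lambda>y. inv c \<otimes> y)" using tg_lmult_cont[OF assms(1)] assms(3) by simp
  have c2: "continuous_map T T (\<lambda>y. y \<otimes> c)" using tg_rmult_cont[OF assms(1) assms(3)] .
  have c3: "continuous_map T T ((\<lambda>y. y \<otimes> c) \<circ> (\<lambda>y. inv c \<otimes> y))" using continuous_map_compose[OF c1 c2] .
  have e: "((\<lambda>y. y \<otimes> c) \<circ> (\<lambda>y. inv c \<otimes> y)) = (\<lambda>y. inv c \<otimes> y \<otimes> c)" by (rule ext) (simp only: comp_apply)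
  have "openin T {y \<in> topspace T. inv c \<otimes> y \<otimes> c \<in> V}"
    using openin_continuous_map_preimage[OF c3 assms(2)] unfolding e .
  then show ?thesis using conj_set_eq[OF Vc assms(3)] tp by simp
qed

lemma (in group) conj_set_compact:
  assumes "topological_group G T" "compactin T V" "c \<in> carrier G"
  shows "compactin T (conj_set G c V)"
proof -
  have c1: "continuous_map T T (\<lambda>y. c \<otimes> y)" using tg_lmult_cont[OF assms(1) assms(3)] .
  have c2: "continuous_map T T (\<lambda>y. y \<otimes> inv c)" using tg_rmult_cont[OF assms(1)] assms(3) by simp
  have c3: "continuous_map T T ((\<lambda>y. y \<otimes> inv c) \<circ> (\<lambda>y. c \<otimes> y))" using continuous_map_compose[OF c1 c2] .
  have e: "((\<lambda>y. y \<otimes> inv c) \<circ> (\<lambda>y. c \<otimes> y)) = (\<lambda>u. c \<otimes> u \<otimes> inv c)" by (rule ext) (simp only: comp_apply)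
  show ?thesis unfolding conj_set_def using image_compactin[OF assms(2) c3] unfolding e .
qed


lemma (in group_hom) preimage_subgroup:
  assumes "subgroup V H"
  shows "subgroup {x \<in> carrier G. h x \<in> V} G"
proof (rule G.subgroupI)
  show "{x \<in> carrier G. h x \<in> V} \<subseteq> carrier G" by blast
  have "\<one> \<in> {x \<in> carrier G. h x \<in> V}" using subgroup.one_closed[OF assms] by simp
  then show "{x \<in> carrier G. h x \<in> V} \<noteq> {}" by blast
  show "inv a \<in> {x \<in> carrier G. h x \<in> V}" if "a \<in> {x \<in> carrier G. h x \<in> V}" for a
    using that subgroup.m_inv_closed[OF assms] by simp
  show "a \<otimes> b \<in> {x \<in> carrier G. h x \<in> V}" if "a \<in> {x \<in> carrier G. h x \<in> V}" "b \<in> {x \<in> carrier G. h x \<in> V}" for a b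
    using that subgroup.m_closed[OF assms] by simp
qed

lemma (in group_hom) finite_cosets_transfer:
  assumes KH: "subgroup KH H" and A: "A \<subseteq> carrier G"
    and fin: "finite ((\<lambda>y. y <#\<^bsub>H\<^esub> KH) ` B)" and AB: "h ` A \<subseteq> B"
  shows "finite ((\<lambda>x. x <#\<^bsub>G\<^esub> {x \<in> carrier G. h x \<in> KH}) ` A)"
proof -
  let ?KG = "{x \<in> carrier G. h x \<in> KH}"
  have KG: "subgroup ?KG G" by (rule preimage_subgroup[OF KH])
  have iff: "x <#\<^bsub>G\<^esub> ?KG = y <#\<^bsub>G\<^esub> ?KG \<longleftrightarrow> h x <#\<^bsub>H\<^esub> KH = h y <#\<^bsub>H\<^esub> KH"
    if xy: "x \<in> A" "y \<in> A" for x y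
  proof -
    have xc: "x \<in> carrier G" and yc: "y \<in> carrier G" using xy A by auto
    have "x <#\<^bsub>G\<^esub> ?KG = y <#\<^bsub>G\<^esub> ?KG \<longleftrightarrow> inv x \<otimes> y \<in> ?KG" by (rule G.coset_eq_iff[OF KG xc yc])
    also have "\<dots> \<longleftrightarrow> inv\<^bsub>H\<^esub> (h x) \<otimes>\<^bsub>H\<^esub> h y \<in> KH" using xc yc by simp
    also have "\<dots> \<longleftrightarrow> h x <#\<^bsub>H\<^esub> KH = h y <#\<^bsub>H\<^esub> KH"
      using H.coset_eq_iff[OF KH] xc yc by simp
    finally show ?thesis .
  qed
  have "(\<lambda>x. h x <#\<^bsub>H\<^esub> KH) ` A \<subseteq> (\<lambda>y. y <#\<^bsub>H\<^esub> KH) ` B" using AB by blast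
  then have "finite ((\<lambda>x. h x <#\<^bsub>H\<^esub> KH) ` A)" using fin by (rule finite_subset)
  then show ?thesis using finite_image_transfer[of A "\<lambda>x. x <#\<^bsub>G\<^esub> ?KG" "\<lambda>x. h x <#\<^bsub>H\<^esub> KH"] iff by blast
qed


lemma (in group) l_coset_image: "a <#\<^bsub>G\<^esub> S = (\<lambda>s. a \<otimes> s) ` S"
  unfolding l_coset_def by blast

lemma (in group_hom) closed_image:
  assumes tG: "tdlc_group G TG"
    and hyp: "\<forall>U. commensurated G U \<and> U \<noteq> carrier G \<and> openin TG U \<longrightarrow> compactin TG U"
    and tH: "tdlc_group H TH" and cont: "continuous_map TG TH h"
  shows "closedin TH (h ` carrier G)"
proof -
  have tgG: "topological_group G TG" using tG by (simp add: tdlc_group_def)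
  have tgH: "topological_group H TH" using tH by (simp add: tdlc_group_def)
  have tpG: "topspace TG = carrier G" using tgG by (rule tg_top)
  have tpH: "topspace TH = carrier H" using tgH by (rule tg_top)
  have hsH: "Hausdorff_space TH" using H.tdlc_hausdorff[OF tH] .
  have Ic: "h ` carrier G \<subseteq> carrier H" by auto
  show ?thesis
  proof (cases "\<exists>V. subgroup V H \<and> openin TH V \<and> compactin TH V \<and> \<not> (h ` carrier G \<subseteq> V)")
    case False
    have "h ` carrier G \<subseteq> {\<one>\<^bsub>H\<^esub>}"
    proof
      fix y assume y: "y \<in> h ` carrier G"
      show "y \<in> {\<one>\<^bsub>H\<^esub>}"
      proof (rule ccontr)
        assume ny: "y \<notin> {\<one>\<^bsub>H\<^esub>}"
        have yc: "y \<in> carrier H" using y Ic by blast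
        have "closedin TH {y}" using closedin_Hausdorff_singleton[OF hsH] yc tpH by simp
        then have W: "openin TH (topspace TH - {y})" by (rule openin_diff[OF openin_topspace])
        have one: "\<one>\<^bsub>H\<^esub> \<in> topspace TH - {y}" using ny tpH by simp
        obtain V where V: "subgroup V H" "openin TH V" "compactin TH V" "V \<subseteq> topspace TH - {y}"
          using H.tdlc_small_compact_open_subgroup[OF tH W one] by blast
        have "h ` carrier G \<subseteq> V" using False V(1,2,3) by blast
        then show False using y V(4) by blast
      qed
    qed
    moreover have "\<one>\<^bsub>H\<^esub> \<in> h ` carrier G"
    proof -
      have "h \<one> \<in> h ` carrier G" by (rule imageI[OF G.one_closed])
      then show ?thesis by simp
    qed
    ultimately have "h ` carrier G = {\<one>\<^bsub>H\<^esub>}" by blast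
    then show ?thesis using closedin_Hausdorff_singleton[OF hsH] tpH by simp
  next
    case True
    then obtain V where V: "subgroup V H" "openin TH V" "compactin TH V" "\<not> h ` carrier G \<subseteq> V" by blast
    have Vc: "V \<subseteq> carrier H" using subgroup.subset[OF V(1)] .
    define U where "U = {x \<in> carrier G. h x \<in> V}"
    have Usub: "subgroup U G" unfolding U_def by (rule preimage_subgroup[OF V(1)])
    have Uc: "U \<subseteq> carrier G" unfolding U_def by blast
    have Uopen: "openin TG U" unfolding U_def using openin_continuous_map_preimage[OF cont V(2)] tpG by simp
    have Une: "U \<noteq> carrier G" using V(4) unfolding U_def by blast
    have Ucomm: "commensurated G U"
      unfolding commensurated_def finite_index_in_def
    proof (intro conjI ballI)
      show "subgroup U G" by (rule Usub)
    next
      fix g assume g: "g \<in> carrier G"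
      define c where "c = h g"
      have cc: "c \<in> carrier H" unfolding c_def using g by simp
      define CH where "CH = conj_set H c V"
      have CHsub: "subgroup CH H" unfolding CH_def by (rule H.conj_set_subgroup[OF V(1) cc])
      have CHopen: "openin TH CH" unfolding CH_def by (rule H.conj_set_open[OF tgH V(2) cc])
      have CHcpt: "compactin TH CH" unfolding CH_def by (rule H.conj_set_compact[OF tgH V(3) cc])
      have CHeq: "CH = {y \<in> carrier H. inv\<^bsub>H\<^esub> c \<otimes>\<^bsub>H\<^esub> y \<otimes>\<^bsub>H\<^esub> c \<in> V}"
        unfolding CH_def by (rule H.conj_set_eq[OF Vc cc])
      have CGeq: "conj_set G g U = {x \<in> carrier G. h x \<in> CH}"
      proof -
        have "conj_set G g U = {x \<in> carrier G. inv g \<otimes> x \<otimes> g \<in> U}" by (rule G.conj_set_eq[OF Uc g])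
        also have "\<dots> = {x \<in> carrier G. h x \<in> CH}"
        proof (rule Collect_cong)
          fix x
          show "(x \<in> carrier G \<and> inv g \<otimes> x \<otimes> g \<in> U) \<longleftrightarrow> (x \<in> carrier G \<and> h x \<in> CH)"
          proof (cases "x \<in> carrier G")
            case True
            have "h (inv g \<otimes> x \<otimes> g) = inv\<^bsub>H\<^esub> c \<otimes>\<^bsub>H\<^esub> h x \<otimes>\<^bsub>H\<^esub> c" unfolding c_def using True g by simp
            then show ?thesis unfolding U_def CHeq using True g by simp
          qed simp
        qed
        finally show ?thesis .
      qed
      have KHsub: "subgroup (CH \<inter> V) H" using subgroup_Int[OF CHsub V(1)] .
      have KHopen: "openin TH (CH \<inter> V)" using openin_Int[OF CHopen V(2)] .
      have KGeq: "conj_set G g U \<inter> U = {x \<in> carrier G. h x \<in> CH \<inter> V}"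
      proof -
        have "conj_set G g U \<inter> U = {x \<in> carrier G. h x \<in> CH} \<inter> U" by (simp only: CGeq)
        also have "\<dots> = {x \<in> carrier G. h x \<in> CH \<inter> V}" unfolding U_def by blast
        finally show ?thesis .
      qed
      show "finite ((\<lambda>x. x <#\<^bsub>G\<^esub> (conj_set G g U \<inter> U)) ` U)"
        unfolding KGeq
      proof (rule finite_cosets_transfer[OF KHsub Uc])
        show "finite ((\<lambda>y. y <#\<^bsub>H\<^esub> (CH \<inter> V)) ` V)" by (rule H.tg_finite_cosets[OF tgH V(3) KHsub KHopen])
        show "h ` U \<subseteq> V" unfolding U_def by blast
      qed
      show "finite ((\<lambda>x. x <#\<^bsub>G\<^esub> (conj_set G g U \<inter> U)) ` conj_set G g U)"
        unfolding KGeq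
      proof (rule finite_cosets_transfer[OF KHsub])
        show "conj_set G g U \<subseteq> carrier G" unfolding CGeq by blast
        show "finite ((\<lambda>y. y <#\<^bsub>H\<^esub> (CH \<inter> V)) ` CH)" by (rule H.tg_finite_cosets[OF tgH CHcpt KHsub KHopen])
        show "h ` conj_set G g U \<subseteq> CH" unfolding CGeq by blast
      qed
    qed
    have Ucpt: "compactin TG U" using hyp Ucomm Une Uopen by blast
    have hUcpt: "compactin TH (h ` U)" by (rule image_compactin[OF Ucpt cont])
    show ?thesis
      unfolding closedin_def
    proof
      show "h ` carrier G \<subseteq> topspace TH" using Ic tpH by simp
      show "openin TH (topspace TH - h ` carrier G)"
        unfolding openin_subopen[of TH "topspace TH - h ` carrier G"]
      proof
        fix x assume x: "x \<in> topspace TH - h ` carrier G"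
        have xc: "x \<in> carrier H" using x tpH by simp
        have xV: "x \<in> x <#\<^bsub>H\<^esub> V" using H.lcos_self[OF xc V(1)] .
        have xVo: "openin TH (x <#\<^bsub>H\<^esub> V)" by (rule H.tg_lcoset_open[OF tgH xc V(2)])
        have xVc: "x <#\<^bsub>H\<^esub> V \<subseteq> topspace TH" using openin_subset[OF xVo] .
        show "\<exists>T. openin TH T \<and> x \<in> T \<and> T \<subseteq> topspace TH - h ` carrier G"
        proof (cases "(x <#\<^bsub>H\<^esub> V) \<inter> (h ` carrier G) = {}")
          case True
          have "x <#\<^bsub>H\<^esub> V \<subseteq> topspace TH - h ` carrier G" using True xVc by blast
          then show ?thesis using xV xVo by blast
        next
          case False
          then obtain g where g: "g \<in> carrier G" "h g \<in> x <#\<^bsub>H\<^esub> V" by blast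
          have hgc: "h g \<in> carrier H" using g by simp
          define C where "C = h g <#\<^bsub>H\<^esub> (h ` U)"
          have "C = (\<lambda>s. h g \<otimes>\<^bsub>H\<^esub> s) ` (h ` U)" unfolding C_def by (rule H.l_coset_image)
          then have Ccpt: "compactin TH C" using image_compactin[OF hUcpt H.tg_lmult_cont[OF tgH hgc]] by simp
          have Ccl: "closedin TH C" by (rule compactin_imp_closedin[OF hsH Ccpt])
          have CI: "C \<subseteq> h ` carrier G"
          proof
            fix z assume "z \<in> C"
            then obtain u where u: "u \<in> U" "z = h g \<otimes>\<^bsub>H\<^esub> h u" unfolding C_def l_coset_def by blast
            have uc: "u \<in> carrier G" using u(1) Uc by blast
            have "z = h (g \<otimes> u)" using u(2) g uc by simp
            moreover have "g \<otimes> u \<in> carrier G" using g uc by simp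
            ultimately show "z \<in> h ` carrier G" by blast
          qed
          have same: "h g <#\<^bsub>H\<^esub> V = x <#\<^bsub>H\<^esub> V" by (rule H.coset_eq_of_mem[OF V(1) xc g(2)])
          define T where "T = (x <#\<^bsub>H\<^esub> V) - C"
          have "openin TH T" unfolding T_def using openin_diff[OF xVo Ccl] .
          moreover have "x \<in> T" unfolding T_def using xV CI x by blast
          moreover have "T \<subseteq> topspace TH - h ` carrier G"
          proof
            fix y assume y: "y \<in> T"
            have y1: "y \<in> h g <#\<^bsub>H\<^esub> V" "y \<notin> C" using y same unfolding T_def by auto
            have "y \<notin> h ` carrier G"
            proof
              assume "y \<in> h ` carrier G"
              then obtain g' where g': "g' \<in> carrier G" "y = h g'" by blast
              obtain v where v: "v \<in> V" "y = h g \<otimes>\<^bsub>H\<^esub> v" using y1(1) unfolding l_coset_def by blast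
              have vc: "v \<in> carrier H" using v(1) Vc by blast
              have "h (inv g \<otimes> g') = inv\<^bsub>H\<^esub> (h g) \<otimes>\<^bsub>H\<^esub> h g'" using g g' by simp
              also have "h g' = h g \<otimes>\<^bsub>H\<^esub> v" using g'(2) v(2) by simp
              also have "inv\<^bsub>H\<^esub> (h g) \<otimes>\<^bsub>H\<^esub> (h g \<otimes>\<^bsub>H\<^esub> v) = v" using hgc vc by (rule H.inv_cancel_l)
              finally have hv: "h (inv g \<otimes> g') = v" .
              have "inv g \<otimes> g' \<in> U" unfolding U_def using g g' v(1) hv by simp
              then have "v \<in> h ` U" using hv by blast
              then have "h g \<otimes>\<^bsub>H\<^esub> v \<in> C" unfolding C_def l_coset_def by blast
              then show False using y1(2) v(2) by simp
            qed
            then show "y \<in> topspace TH - h ` carrier G" using y xVc unfolding T_def by blast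
          qed
          ultimately show ?thesis by blast
        qed
      qed
    qed
  qed
qed

theorem mainTheorem18:
  fixes G :: "('a, 'm) monoid_scheme" and TG :: "'a topology"
  assumes "tdlc_group G TG"
    and "\<forall>U. commensurated G U \<and> U \<noteq> carrier G \<and> openin TG U \<longrightarrow> compactin TG U"
  shows "\<forall>(H :: ('b, 'n) monoid_scheme) (TH :: 'b topology) (\<phi> :: 'a \<Rightarrow> 'b).
           tdlc_group H TH \<and> \<phi> \<in> hom G H \<and> continuous_map TG TH \<phi>
           \<longrightarrow> closedin TH (\<phi> ` carrier G)"
proof (intro allI impI)
  fix H :: "('b, 'n) monoid_scheme" and TH :: "'b topology" and \<phi> :: "'a \<Rightarrow> 'b"
  assume a: "tdlc_group H TH \<and> \<phi> \<in> hom G H \<and> continuous_map TG TH \<phi>"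
  have gG: "group G" using assms(1) by (simp add: tdlc_group_def topological_group_def)
  have gH: "group H" using a by (simp add: tdlc_group_def topological_group_def)
  have gh: "group_hom G H \<phi>" unfolding group_hom_def group_hom_axioms_def using gG gH a by simp
  show "closedin TH (\<phi> ` carrier G)"
    using group_hom.closed_image[OF gh assms(1) assms(2)] a by blast
qed

end
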